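(* Let $0\le \ell<n$ be integers, let $d$ be a divisor of $n$ and let $y\in\mathbb{Z}_{n,d}$. Then the number of $x\in\mathbb{Z}_n^*$ such that $xb\equiv y\pmod n$ for some integer $b$ with $0\le b\le \ell$ equals $$\frac{\varphi\!\left(\frac{n}{d},\left\lfloor \frac{\ell}{d}\right\rfloor\right)}{\varphi\!\left(\frac nd\right)}\,\varphi(n).$$
   Context: $\mathbb{Z}_m=\{0,1,\dots,m-1\}$ denotes the integers modulo $m$; $\mathbb{Z}_{m,d}=\{x\in\mathbb{Z}_m:\gcd(x,m)=d\}$ and $\mathbb{Z}_m^*=\mathbb{Z}_{m,1}$. $\varphi(m)=|\mathbb{Z}_m^*|$ is Euler's totient function, and the relative totient function is $\varphi(m,k)=|\{x\in\mathbb{Z}_m^*: x\le k\}|$. *)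

theory Defs
  imports Complex_Main "HOL-Number_Theory.Number_Theory"
begin

definition Zmd :: "nat \<Rightarrow> nat \<Rightarrow> nat set" where
  "Zmd m d = {x. x < m \<and> gcd x m = d}"

definition Zunits :: "nat \<Rightarrow> nat set" where
  "Zunits m = Zmd m 1"

definition rel_totient :: "nat \<Rightarrow> nat \<Rightarrow> nat" where
  "rel_totient m k = card {x \<in> Zunits m. x \<le> k}"

end

theory Submission imports Defs begin

lemma lift_unit:
  fixes m n a :: nat
  assumes "m dvd n" "n > 0" "coprime a m"
  shows "\<exists>u. coprime u n \<and> [u = a] (mod m)"
proof -
  define P where "P = {p \<in> prime_factors n. \<not> p dvd a \<and> \<not> p dvd m}"
  define t where "t = \<Prod>P"
  define u where "u = a + m * t"
  have finP: "finite P" unfolding P_def by auto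
  have tdvd: "p dvd t \<longleftrightarrow> p \<in> P" if "prime p" for p
  proof -
    have "p dvd t \<longleftrightarrow> (\<exists>q\<in>P. p dvd q)" unfolding t_def
      using prime_dvd_prod_iff[OF finP that, of id] by simp
    also have "\<dots> \<longleftrightarrow> p \<in> P"
    proof
      assume "\<exists>q\<in>P. p dvd q"
      then obtain q where q: "q \<in> P" "p dvd q" by blast
      have "prime q" using q(1) unfolding P_def by auto
      then have "p = q" using primes_dvd_imp_eq[OF that _ q(2)] by simp
      then show "p \<in> P" using q by simp
    qed (use dvd_refl in blast)
    finally show ?thesis .
  qed
  have "coprime u n"
  proof (rule ccontr)
    assume nc: "\<not> coprime u n"
    have "gcd u n \<noteq> 0" using assms(2) by simp
    moreover have "\<not> is_unit (gcd u n)" using nc is_unit_gcd by blast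
    ultimately obtain p where p: "p dvd gcd u n" "prime p"
      using prime_divisor_exists by blast
    have pu: "p dvd u" and pn: "p dvd n" using p by auto
    have pf: "p \<in> prime_factors n" using pn p(2) assms(2) by (auto simp: in_prime_factors_iff)
    show False
    proof (cases "p dvd m")
      case True
      then have "p dvd m * t" by simp
      with pu have "p dvd a" unfolding u_def by (simp add: dvd_add_left_iff)
      with True assms(3) p(2) show False
        by (meson coprime_common_divisor not_prime_unit)
    next
      case pm: False
      show ?thesis
      proof (cases "p dvd a")
        case True
        then have "p dvd m * t" using pu unfolding u_def by (simp add: dvd_add_right_iff)
        then have "p dvd t" using pm p(2) prime_dvd_mult_iff by blast
        with tdvd[OF p(2)] True show False unfolding P_def by auto
      next
        case False
        then have "p \<in> P" using pm pf unfolding P_def by auto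
        then have "p dvd m * t" using tdvd[OF p(2)] by simp
        then have "p dvd a" using pu unfolding u_def by (simp add: dvd_add_left_iff)
        with False show False by simp
      qed
    qed
  qed
  moreover have "[u = a] (mod m)" unfolding u_def cong_def by simp
  ultimately show ?thesis by blast
qed

lemma fiber_le:
  fixes m n a b :: nat
  assumes "m dvd n" "n > 0" "a < m" "coprime a m" "b < m" "coprime b m"
  shows "card {u. u < n \<and> coprime u n \<and> u mod m = a}
         \<le> card {u. u < n \<and> coprime u n \<and> u mod m = b}"
proof -
  have m0: "m > 0" using assms by auto
  obtain ia where ia: "[a * ia = 1] (mod m)" using cong_solve_coprime_nat[OF assms(4)] by (metis One_nat_def)
  define c where "c = b * ia"
  have "coprime (a * ia) m" using cong_imp_coprime[OF cong_sym[OF ia]] by simp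
  then have "coprime ia m" by simp
  then have cc: "coprime c m" unfolding c_def using assms(6) by simp
  obtain w where w: "coprime w n" "[w = c] (mod m)"
    using lift_unit[OF assms(1,2) cc] by blast
  define f where "f u = w * u mod n" for u
  show ?thesis
  proof (rule card_inj_on_le)
    show "inj_on f {u. u < n \<and> coprime u n \<and> u mod m = a}"
    proof (rule inj_onI)
      fix u v assume u: "u \<in> {u. u < n \<and> coprime u n \<and> u mod m = a}"
        and v: "v \<in> {u. u < n \<and> coprime u n \<and> u mod m = a}" and e: "f u = f v"
      have "[w * u = w * v] (mod n)" using e unfolding f_def cong_def .
      then have "[u = v] (mod n)" using cong_mult_lcancel_nat[OF w(1)] by simp
      then show "u = v" using u v cong_less_modulus_unique_nat by blast
    qed
    show "f ` {u. u < n \<and> coprime u n \<and> u mod m = a} \<subseteq> {u. u < n \<and> coprime u n \<and> u mod m = b}"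
    proof
      fix z assume "z \<in> f ` {u. u < n \<and> coprime u n \<and> u mod m = a}"
      then obtain u where u: "u < n" "coprime u n" "u mod m = a" and z: "z = f u" by blast
      have "z < n" unfolding z f_def using assms(2) by simp
      moreover have "coprime z n" unfolding z f_def using assms(2) u(2) w(1) by simp
      moreover have "z mod m = b"
      proof -
        have "z mod m = w * u mod m" unfolding z f_def using assms(1) by (simp add: mod_mod_cancel)
        have ua: "[u = a] (mod m)" using u(3) assms(3) by (simp add: cong_def)
        have "[w * u = c * a] (mod m)" using cong_mult[OF w(2) ua] .
        moreover have "[c * a = b * (a * ia)] (mod m)" unfolding c_def by (simp add: ac_simps cong_refl)
        moreover have "[b * (a * ia) = b * 1] (mod m)"
          using cong_scalar_left[OF ia, of b] .
        ultimately have "[w * u = b] (mod m)" by (metis cong_trans mult_1_right)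
        then show ?thesis using \<open>z mod m = w * u mod m\<close> assms(5) by (simp add: cong_def)
      qed
      ultimately show "z \<in> {u. u < n \<and> coprime u n \<and> u mod m = b}" by simp
    qed
    show "finite {u. u < n \<and> coprime u n \<and> u mod m = b}" by simp
  qed
qed


lemma Zunits_iff: "x \<in> Zunits n \<longleftrightarrow> x < n \<and> coprime x n"
  unfolding Zunits_def Zmd_def coprime_iff_gcd_eq_1 by (rule mem_Collect_eq)

lemma card_Zunits: "n > 0 \<Longrightarrow> card (Zunits n) = totient n"
proof (cases "n = 1")
  case True
  then have "Zunits n = {0}" by (auto simp: Zunits_iff)
  then show ?thesis using True by simp
next
  case False
  assume n0: "n > 0"
  have 1: "Zunits n \<subseteq> totatives n"
  proof
    fix x assume "x \<in> Zunits n"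
    then have x: "x < n" "coprime x n" by (auto simp: Zunits_iff)
    have "x \<noteq> 0" using x(2) False by (metis coprime_0_left_iff nat_dvd_1_iff_1)
    then show "x \<in> totatives n" using x by (simp add: in_totatives_iff)
  qed
  have 2: "totatives n \<subseteq> Zunits n"
  proof
    fix x assume "x \<in> totatives n"
    then have x: "0 < x" "x \<le> n" "coprime x n" by (auto simp: in_totatives_iff)
    have "x \<noteq> n" using x(3) False by (metis coprime_self nat_dvd_1_iff_1)
    then show "x \<in> Zunits n" using x by (simp add: Zunits_iff)
  qed
  from 1 2 have "Zunits n = totatives n" by (rule subset_antisym)
  then show ?thesis by (simp add: totient_def)
qed

lemma key:
  fixes d m x l y' :: nat
  assumes d: "d > 0" and cx: "coprime x (d * m)"
  shows "(\<exists>b\<le>l. [x * b = d * y'] (mod d * m)) \<longleftrightarrow> (\<exists>c\<le>l div d. [(x mod m) * c = y'] (mod m))"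
proof
  assume "\<exists>b\<le>l. [x * b = d * y'] (mod d * m)"
  then obtain b where b: "b \<le> l" "[x * b = d * y'] (mod d * m)" by blast
  have "[x * b = d * y'] (mod d)" using cong_dvd_modulus_nat[OF b(2), of d] by simp
  then have "d dvd x * b \<longleftrightarrow> d dvd d * y'" by (rule cong_dvd_iff)
  then have "d dvd x * b" by simp
  moreover have "coprime x d" using cx by simp
  ultimately have "d dvd b" by (simp add: coprime_commute coprime_dvd_mult_right_iff)
  then obtain c where c: "b = d * c" by blast
  have xb: "x * b = d * (x * c)" unfolding c by simp
  have "d * (x * c) mod (d * m) = d * y' mod (d * m)" using b(2) unfolding xb cong_def .
  then have "d * (x * c mod m) = d * (y' mod m)" by (simp only: mod_mult_mult1)
  then have "[x * c = y'] (mod m)" using d by (simp add: cong_def)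
  then have "[(x mod m) * c = y'] (mod m)" by (simp add: cong_def mod_mult_left_eq)
  moreover have "c \<le> l div d" using b(1) d unfolding c by (simp add: less_eq_div_iff_mult_less_eq mult.commute)
  ultimately show "\<exists>c\<le>l div d. [(x mod m) * c = y'] (mod m)" by blast
next
  assume "\<exists>c\<le>l div d. [(x mod m) * c = y'] (mod m)"
  then obtain c where c: "c \<le> l div d" "[(x mod m) * c = y'] (mod m)" by blast
  have "[x * c = y'] (mod m)" using c(2) by (simp add: cong_def mod_mult_left_eq)
  then have "d * (x * c mod m) = d * (y' mod m)" by (simp add: cong_def)
  then have "d * (x * c) mod (d * m) = d * y' mod (d * m)" by (simp only: mod_mult_mult1)
  moreover have "x * (d * c) = d * (x * c)" by simp
  ultimately have "[x * (d * c) = d * y'] (mod d * m)" unfolding cong_def by simp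
  moreover have "d * c \<le> l" using c(1) d by (simp add: less_eq_div_iff_mult_less_eq mult.commute)
  ultimately show "\<exists>b\<le>l. [x * b = d * y'] (mod d * m)" by blast
qed



definition minv :: "nat \<Rightarrow> nat \<Rightarrow> nat" where
  "minv m z = (SOME i. [z * i = 1] (mod m))"

lemma minv_prop: "coprime z m \<Longrightarrow> [z * minv m z = 1] (mod m)"
  unfolding minv_def
  by (rule someI_ex) (use cong_solve_coprime_nat[of z m] in \<open>metis One_nat_def\<close>)

lemma solve_unique:
  fixes m a c y' :: nat
  assumes "coprime a m" "[a * c = y'] (mod m)" "c < m"
  shows "y' * minv m a mod m = c"
proof -
  have i: "[a * minv m a = 1] (mod m)" by (rule minv_prop[OF assms(1)])
  have "[a * minv m a * c = 1 * c] (mod m)" using cong_mult[OF i cong_refl[of c]] .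
  moreover have "[minv m a * (a * c) = minv m a * y'] (mod m)" using cong_scalar_left[OF assms(2)] .
  moreover have "a * minv m a * c = minv m a * (a * c)" by (simp add: ac_simps)
  ultimately have "[c = minv m a * y'] (mod m)"
    by (metis cong_sym cong_trans mult_1)
  then have "c mod m = (y' * minv m a) mod m" by (simp add: cong_def ac_simps)
  then show ?thesis using assms(3) by simp
qed

lemma card_AC:
  fixes m y' L :: nat
  assumes m0: "m > 0" and cy: "coprime y' m" and Lm: "L < m"
  shows "card {a \<in> Zunits m. \<exists>c\<le>L. [a * c = y'] (mod m)} = card {c \<in> Zunits m. c \<le> L}"
    (is "card ?A = card ?C")
proof -
  define h where "h z = y' * minv m z mod m" for z
  have hA: "h a \<in> ?C \<and> h (h a) = a" if "a \<in> ?A" for a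
  proof -
    from that obtain c where a: "a < m" "coprime a m" and c: "c \<le> L" "[a * c = y'] (mod m)"
      by (auto simp: Zunits_iff)
    have cm: "c < m" using c(1) Lm by simp
    have hac: "h a = c" unfolding h_def using solve_unique[OF a(2) c(2) cm] .
    have "coprime (a * c) m" using cong_imp_coprime[OF cong_sym[OF c(2)] cy] .
    then have cc: "coprime c m" by simp
    have "[c * a = y'] (mod m)" using c(2) by (simp add: ac_simps)
    then have "h c = a" unfolding h_def using solve_unique[OF cc _ a(1)] by blast
    then show ?thesis using hac cc cm c(1) by (simp add: Zunits_iff)
  qed
  have hC: "h c \<in> ?A \<and> h (h c) = c" if "c \<in> ?C" for c
  proof -
    from that have c: "c < m" "coprime c m" "c \<le> L" by (auto simp: Zunits_iff)
    define a where "a = h c"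
    have am: "a < m" unfolding a_def h_def using m0 by simp
    have i: "[c * minv m c = 1] (mod m)" by (rule minv_prop[OF c(2)])
    have "[a = y' * minv m c] (mod m)" unfolding a_def h_def by (simp add: cong_def)
    then have "[a * c = y' * minv m c * c] (mod m)" by (rule cong_mult[OF _ cong_refl])
    moreover have "[y' * (c * minv m c) = y' * 1] (mod m)" using cong_scalar_left[OF i] .
    moreover have "y' * minv m c * c = y' * (c * minv m c)" by (simp add: ac_simps)
    ultimately have ac: "[a * c = y'] (mod m)" by (metis cong_trans mult_1_right)
    have "coprime (a * c) m" using cong_imp_coprime[OF cong_sym[OF ac] cy] .
    then have ca: "coprime a m" by simp
    have "h a = c" unfolding h_def using solve_unique[OF ca ac c(1)] .
    then show ?thesis using ac ca am c(3) unfolding a_def by (auto simp: Zunits_iff)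
  qed
  have fin: "finite ?A" "finite ?C" by (auto simp: Zunits_def Zmd_def)
  have "card ?A \<le> card ?C"
    by (rule card_inj_on_le[of h]) (use hA fin in \<open>auto intro: inj_on_inverseI[of _ h]\<close>)
  moreover have "card ?C \<le> card ?A"
    by (rule card_inj_on_le[of h]) (use hC fin in \<open>auto intro: inj_on_inverseI[of _ h]\<close>)
  ultimately show ?thesis by simp
qed

theorem mainTheorem2:
  fixes n l d y :: nat
  assumes "l < n" and "d dvd n" and "y \<in> Zmd n d"
  shows "real (card {x \<in> Zunits n. \<exists>b::nat. b \<le> l \<and> [x * b = y] (mod n)})
         = real (rel_totient (n div d) (l div d)) / real (totient (n div d)) * real (totient n)"
proof -
  have n0: "n > 0" using assms(1) by simp
  have yn: "y < n" "gcd y n = d" using assms(3) by (auto simp: Zmd_def)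
  have d0: "d > 0" using yn(2) n0 by (cases "d = 0") auto
  define m where "m = n div d"
  have nm: "n = d * m" unfolding m_def using assms(2) by simp
  have m0: "m > 0" using n0 nm by simp
  have "d dvd y" using yn(2) gcd_dvd1[of y n] by simp
  define y' where "y' = y div d"
  have yy: "y = d * y'" unfolding y'_def using \<open>d dvd y\<close> by simp
  have "d * gcd y' m = d * 1" using yn(2) unfolding yy nm by (simp add: gcd_mult_distrib_nat)
  then have "gcd y' m = 1" using d0 by simp
  then have cy: "coprime y' m" unfolding coprime_iff_gcd_eq_1 .
  define L where "L = l div d"
  have Lm: "L < m" unfolding L_def using assms(1) nm by (simp add: less_mult_imp_div_less mult.commute)
  define F where "F a = {u. u < n \<and> coprime u n \<and> u mod m = a}" for a
  define K where "K = card (F (1 mod m))"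
  have one: "1 mod m < m" "coprime (1 mod m) m" using m0 by auto
  have FK: "card (F a) = K" if "a \<in> Zunits m" for a
  proof -
    have a: "a < m" "coprime a m" using that by (auto simp: Zunits_iff)
    have dv: "m dvd n" using nm by simp
    show ?thesis unfolding K_def F_def
      using fiber_le[OF dv n0 a one] fiber_le[OF dv n0 one a] by simp
  qed
  have finF: "finite (F a)" for a unfolding F_def by simp
  have disj: "\<forall>i\<in>I. \<forall>j\<in>I. i \<noteq> j \<longrightarrow> F i \<inter> F j = {}" for I unfolding F_def by auto
  have umod: "x mod m \<in> Zunits m" if "x \<in> Zunits n" for x
  proof -
    have "coprime x (d * m)" using that nm by (simp add: Zunits_iff)
    then have "coprime x m" by simp
    then show ?thesis using m0 by (simp add: Zunits_iff)
  qed
  have finZ: "finite (Zunits m)" by (auto simp: Zunits_def Zmd_def)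
  have "Zunits n = (\<Union>a\<in>Zunits m. F a)"
    using umod unfolding F_def by (auto simp: Zunits_iff)
  then have "card (Zunits n) = (\<Sum>a\<in>Zunits m. card (F a))"
    using card_UN_disjoint[OF finZ _ disj] finF by simp
  also have "\<dots> = card (Zunits m) * K" using FK by simp
  finally have cn: "totient n = totient m * K" using card_Zunits n0 m0 by simp
  define A where "A = {a \<in> Zunits m. \<exists>c\<le>L. [a * c = y'] (mod m)}"
  have finA: "finite A" unfolding A_def using finZ by simp
  have memiff: "x \<in> {x \<in> Zunits n. \<exists>b::nat. b \<le> l \<and> [x * b = y] (mod n)} \<longleftrightarrow> x \<in> (\<Union>a\<in>A. F a)" for x
  proof (cases "x \<in> Zunits n")
    case True
    have cx: "coprime x (d * m)" using True nm by (simp add: Zunits_iff)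
    have "(\<exists>b::nat. b \<le> l \<and> [x * b = y] (mod n)) \<longleftrightarrow> (\<exists>b\<le>l. [x * b = d * y'] (mod d * m))"
      unfolding yy nm by blast
    also have "\<dots> \<longleftrightarrow> (\<exists>c\<le>L. [(x mod m) * c = y'] (mod m))"
      unfolding L_def by (rule key[OF d0 cx])
    finally show ?thesis using True umod[OF True] unfolding A_def F_def by (auto simp: Zunits_iff)
  next
    case False
    then show ?thesis unfolding F_def by (auto simp: Zunits_iff)
  qed
  have "{x \<in> Zunits n. \<exists>b::nat. b \<le> l \<and> [x * b = y] (mod n)} = (\<Union>a\<in>A. F a)"
    using memiff by blast
  then have "card {x \<in> Zunits n. \<exists>b::nat. b \<le> l \<and> [x * b = y] (mod n)} = (\<Sum>a\<in>A. card (F a))"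
    using card_UN_disjoint[OF finA _ disj] finF by simp
  also have "\<dots> = card A * K" using FK unfolding A_def by simp
  also have "card A = rel_totient m L"
    unfolding A_def rel_totient_def using card_AC[OF m0 cy Lm] .
  finally have cs: "card {x \<in> Zunits n. \<exists>b::nat. b \<le> l \<and> [x * b = y] (mod n)} = rel_totient m L * K" .
  have tm: "totient m > 0" using m0 by simp
  show ?thesis unfolding cs cn m_def[symmetric] L_def[symmetric] using tm by simp
qed

end
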